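(* Let $k\ge2$, $1\le m<k$, and alternatives $\ell=1,\dots,k$ with i.i.d. replications (independent across alternatives) whose means are pairwise distinct and ordered $\mu_{\langle 1\rangle}>\dots>\mu_{\langle k\rangle}$, satisfying Assumptions 1–4 of the context. For $i\in\{1,\dots,m\}$, $j\in\{m+1,\dots,k\}$ and $r_{\langle i\rangle},r_{\langle j\rangle}\ge0$ define $G_{ij}(r_{\langle i\rangle},r_{\langle j\rangle})=\inf_{x\in\mathbb R}\big(r_{\langle i\rangle}\Lambda^*_{\langle i\rangle}(x)+r_{\langle j\rangle}\Lambda^*_{\langle j\rangle}(x)\big)$. Then on $\{(r_{\langle i\rangle},r_{\langle j\rangle})>0\}$, $G_{ij}$ is strictly increasing in $r_{\langle i\rangle}$ and strictly increasing in $r_{\langle j\rangle}$; moreover $G_{ij}(r_{\langle i\rangle},r_{\langle j\rangle})=0$ whenever $\min(r_{\langle i\rangle},r_{\langle j\rangle})=0$.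
   Context: $\bar X_\ell(n)$ is the sample mean of $n$ replications of alternative $\ell$, $\Lambda^{(n)}_\ell(\lambda)=\log\mathbb E[e^{\lambda\bar X_\ell(n)}]$. Assumption 1: $\Lambda_\ell(\lambda)=\lim_{n\to\infty}\frac1n\Lambda^{(n)}_\ell(n\lambda)$ exists as an extended real number for all $\lambda$. With $\mathcal D_{\Lambda_\ell}=\{\lambda:\Lambda_\ell(\lambda)<\infty\}$, interior $\mathcal D^o_{\Lambda_\ell}$, and $\mathcal F_\ell=\{\Lambda'_\ell(\lambda):\lambda\in\mathcal D^o_{\Lambda_\ell}\}$, interior $\mathcal F^o_\ell$: Assumption 2: $0\in\mathcal D^o_{\Lambda_\ell}$. Assumption 3: $\Lambda_\ell$ strictly convex, continuous on $\mathcal D^o_{\Lambda_\ell}$ and steep ($|\Lambda'_\ell(\lambda_n)|\to\infty$ along sequences tending to a boundary point of $\mathcal D^o_{\Lambda_\ell}$). Assumption 4: $[\mu_{\langle k\rangle},\mu_{\langle1\rangle}]\subset\bigcap_\ell\mathcal F^o_\ell$. $\Lambda^*_\ell(x)=\sup_\lambda\{\lambda x-\Lambda_\ell(\lambda)\}$. *)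

theory Defs
  imports "HOL-Probability.Probability"
begin

text \<open>Natural logarithm on nonnegative extended reals (the argument is an expectation
  of a positive quantity, possibly infinite); log of infinity is infinity.\<close>
definition ln_ennreal :: "ennreal \<Rightarrow> ereal" where
  "ln_ennreal v = (if v = \<top> then \<infinity> else ereal (ln (enn2real v)))"

definition sample_mean :: "(nat \<Rightarrow> nat \<Rightarrow> 'a \<Rightarrow> real) \<Rightarrow> nat \<Rightarrow> nat \<Rightarrow> 'a \<Rightarrow> real" where
  "sample_mean X l n \<omega> = (\<Sum>r<n. X l r \<omega>) / real n"

definition Lambda_n :: "'a measure \<Rightarrow> (nat \<Rightarrow> nat \<Rightarrow> 'a \<Rightarrow> real) \<Rightarrow> nat \<Rightarrow> nat \<Rightarrow> real \<Rightarrow> ereal" where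
  "Lambda_n M X l n t = ln_ennreal (\<integral>\<^sup>+ \<omega>. ennreal (exp (t * sample_mean X l n \<omega>)) \<partial>M)"

definition scaled_cgf :: "'a measure \<Rightarrow> (nat \<Rightarrow> nat \<Rightarrow> 'a \<Rightarrow> real) \<Rightarrow> nat \<Rightarrow> real \<Rightarrow> nat \<Rightarrow> ereal" where
  "scaled_cgf M X l t n = Lambda_n M X l n (real n * t) / ereal (real n)"

text \<open>Lambda_l(lambda) = lim (1/n) Lambda^(n)_l(n lambda) (meaningful under Assumption 1).\<close>
definition Lambda :: "'a measure \<Rightarrow> (nat \<Rightarrow> nat \<Rightarrow> 'a \<Rightarrow> real) \<Rightarrow> nat \<Rightarrow> real \<Rightarrow> ereal" where
  "Lambda M X l t = lim (scaled_cgf M X l t)"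

definition dom_Lambda :: "'a measure \<Rightarrow> (nat \<Rightarrow> nat \<Rightarrow> 'a \<Rightarrow> real) \<Rightarrow> nat \<Rightarrow> real set" where
  "dom_Lambda M X l = {t. Lambda M X l t < \<infinity>}"

text \<open>Real-valued version of Lambda_l (used on the interior of its domain).\<close>
definition Lambda_r :: "'a measure \<Rightarrow> (nat \<Rightarrow> nat \<Rightarrow> 'a \<Rightarrow> real) \<Rightarrow> nat \<Rightarrow> real \<Rightarrow> real" where
  "Lambda_r M X l t = real_of_ereal (Lambda M X l t)"

definition F_set :: "'a measure \<Rightarrow> (nat \<Rightarrow> nat \<Rightarrow> 'a \<Rightarrow> real) \<Rightarrow> nat \<Rightarrow> real set" where
  "F_set M X l = (\<lambda>z. deriv (Lambda_r M X l) z) ` interior (dom_Lambda M X l)"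

definition Lambda_star :: "'a measure \<Rightarrow> (nat \<Rightarrow> nat \<Rightarrow> 'a \<Rightarrow> real) \<Rightarrow> nat \<Rightarrow> real \<Rightarrow> ereal" where
  "Lambda_star M X l x = (SUP t. ereal (t * x) - Lambda M X l t)"

definition assm1 where
  "assm1 M X l \<longleftrightarrow> (\<forall>t. convergent (scaled_cgf M X l t))"

definition assm2 where
  "assm2 M X l \<longleftrightarrow> 0 \<in> interior (dom_Lambda M X l)"

definition assm3 where
  "assm3 M X l \<longleftrightarrow>
     (let D = interior (dom_Lambda M X l); f = Lambda_r M X l in
        (\<forall>a\<in>D. \<forall>b\<in>D. \<forall>t::real. a \<noteq> b \<and> 0 < t \<and> t < 1 \<longrightarrow>
            f (t * a + (1 - t) * b) < t * f a + (1 - t) * f b)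
      \<and> continuous_on D f
      \<and> (\<forall>t\<in>D. f differentiable (at t))
      \<and> (\<forall>s b. (\<forall>n. s n \<in> D) \<longrightarrow> b \<in> frontier D \<longrightarrow> s \<longlonglongrightarrow> b \<longrightarrow>
             filterlim (\<lambda>n. \<bar>deriv f (s n)\<bar>) at_top sequentially))"

text \<open>G_ij(r_i, r_j) = inf_x (r_i Lambda^*_<i>(x) + r_j Lambda^*_<j>(x)),
  with sigma i = <i> the index of the i-th largest mean.\<close>
definition G :: "'a measure \<Rightarrow> (nat \<Rightarrow> nat \<Rightarrow> 'a \<Rightarrow> real) \<Rightarrow> (nat \<Rightarrow> nat) \<Rightarrow> nat \<Rightarrow> nat \<Rightarrow> real \<Rightarrow> real \<Rightarrow> ereal" where
  "G M X \<sigma> i j ri rj =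
     (INF x. ereal ri * Lambda_star M X (\<sigma> i) x + ereal rj * Lambda_star M X (\<sigma> j) x)"

end

theory Submission
  imports Defs
begin

lemma ereal_mult_le_self:
  fixes y :: ereal assumes "0 \<le> t" "t \<le> 1" "0 \<le> y"
  shows "ereal t * y \<le> y"
  using assms by (cases y) (auto simp: mult_left_le_one_le)

lemma combine:
  fixes f g :: "real \<Rightarrow> ereal" and a b p p' q :: real
  assumes f0: "\<And>x. 0 \<le> f x" and g0: "\<And>x. 0 \<le> g x"
    and fa: "f a = 0" and gb: "g b = 0" and ab: "a \<noteq> b"
    and fpos: "\<And>x. x \<noteq> a \<Longrightarrow> 0 < f x"
    and gpos: "\<And>x. x \<noteq> b \<Longrightarrow> 0 < g x"
    and fconv: "\<And>u w \<theta>. 0 \<le> \<theta> \<Longrightarrow> \<theta> \<le> 1 \<Longrightarrow> f ((1-\<theta>)*u + \<theta>*w) \<le> ereal (1-\<theta>) * f u + ereal \<theta> * f w"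
    and gconv: "\<And>u w \<theta>. 0 \<le> \<theta> \<Longrightarrow> \<theta> \<le> 1 \<Longrightarrow> g ((1-\<theta>)*u + \<theta>*w) \<le> ereal (1-\<theta>) * g u + ereal \<theta> * g w"
    and fsmall: "\<And>\<epsilon>. \<epsilon> > 0 \<Longrightarrow> \<exists>h0>0. \<forall>h. 0 < h \<and> h < h0 \<longrightarrow> f (a+h) \<le> ereal (\<epsilon>*h) \<and> f (a-h) \<le> ereal (\<epsilon>*h)"
    and glsc: "\<And>\<epsilon>. \<epsilon> > 0 \<Longrightarrow> \<exists>\<delta>>0. \<forall>y. \<bar>y-a\<bar> < \<delta> \<longrightarrow> g a - ereal \<epsilon> \<le> g y"
    and gfin: "g a < \<infinity>"
    and p: "0 < p" "p < p'" and q: "0 < q"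
  shows "(INF x. ereal p * f x + ereal q * g x) < (INF x. ereal p' * f x + ereal q * g x)"
proof -
  define ga where "ga = real_of_ereal (g a)"
  have gaE: "g a = ereal ga" using gfin g0[of a] unfolding ga_def by (cases "g a") auto
  have ga0: "ga > 0" using gpos[of a] ab gaE by auto
  define K where "K = (INF x. ereal p * f x + ereal q * g x)"
  define Ld where "Ld = \<bar>b - a\<bar>"
  have Ld0: "Ld > 0" using ab by (simp add: Ld_def)
  define \<epsilon> where "\<epsilon> = q*ga/(2*p*Ld)"
  have \<epsilon>0: "\<epsilon> > 0" using ga0 q p Ld0 by (simp add: \<epsilon>_def)
  obtain h0 where h0: "h0 > 0" "\<And>h. 0 < h \<Longrightarrow> h < h0 \<Longrightarrow> f (a+h) \<le> ereal (\<epsilon>*h) \<and> f (a-h) \<le> ereal (\<epsilon>*h)"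
    using fsmall[OF \<epsilon>0] by blast
  define h where "h = min (h0/2) (Ld/2)"
  have h: "0 < h" "h < h0" "h < Ld" using h0 Ld0 by (auto simp: h_def)
  define \<theta> where "\<theta> = h / Ld"
  have \<theta>: "0 \<le> \<theta>" "\<theta> \<le> 1" using h Ld0 by (auto simp: \<theta>_def)
  define x where "x = (1-\<theta>)*a + \<theta>*b"
  have fx: "f x \<le> ereal (\<epsilon>*h)"
  proof (cases "a < b")
    case True
    then have "Ld = b - a" by (simp add: Ld_def)
    then have "\<theta>*(b-a) = h" using Ld0 by (simp add: \<theta>_def)
    moreover have "x = a + \<theta>*(b-a)" by (simp add: x_def algebra_simps)
    ultimately have "x = a + h" by simp
    then show ?thesis using h0(2)[OF h(1,2)] by simp
  next
    case False
    then have "Ld = a - b" by (simp add: Ld_def)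
    then have "\<theta>*(a-b) = h" using Ld0 by (simp add: \<theta>_def)
    moreover have "x = a - \<theta>*(a-b)" by (simp add: x_def algebra_simps)
    ultimately have "x = a - h" by simp
    then show ?thesis using h0(2)[OF h(1,2)] by simp
  qed
  have gx: "g x \<le> ereal ((1-\<theta>)*ga)"
    using gconv[OF \<theta>, of a b] unfolding x_def[symmetric] by (simp add: gaE gb)
  have "K \<le> ereal p * f x + ereal q * g x" unfolding K_def by (rule INF_lower) simp
  also have "\<dots> \<le> ereal p * ereal (\<epsilon>*h) + ereal q * ereal ((1-\<theta>)*ga)"
    by (intro add_mono ereal_mult_left_mono fx gx) (use p q in auto)
  also have "\<dots> = ereal (q*ga - q*ga*h/(2*Ld))"
    using p Ld0 by (simp add: \<epsilon>_def \<theta>_def field_simps)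
  also have "\<dots> < ereal (q*ga)" using q ga0 h Ld0 by simp
  finally have KC: "K < ereal (q*ga)" .
  have K0: "0 \<le> K" unfolding K_def
    by (intro INF_greatest add_nonneg_nonneg) (use p q f0 g0 in auto)
  define \<kappa> where "\<kappa> = real_of_ereal K"
  have KE: "K = ereal \<kappa>" using K0 KC unfolding \<kappa>_def by (cases K) auto
  have \<kappa>C: "\<kappa> < q*ga" using KC KE by simp
  define \<epsilon>2 where "\<epsilon>2 = (q*ga - \<kappa>)/(2*q)"
  have \<epsilon>20: "\<epsilon>2 > 0" using \<kappa>C q by (simp add: \<epsilon>2_def)
  obtain \<delta> where \<delta>: "\<delta> > 0" "\<And>y. \<bar>y-a\<bar> < \<delta> \<Longrightarrow> g a - ereal \<epsilon>2 \<le> g y"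
    using glsc[OF \<epsilon>20] by blast
  define \<eta>0 where "\<eta>0 = min (f (a-\<delta>)) (f (a+\<delta>))"
  have \<eta>00: "\<eta>0 > 0" using fpos[of "a-\<delta>"] fpos[of "a+\<delta>"] \<delta> by (simp add: \<eta>0_def)
  obtain \<eta> where \<eta>: "\<eta> > 0" "ereal \<eta> \<le> \<eta>0"
  proof (cases \<eta>0)
    case (real r) then show ?thesis using that[of r] \<eta>00 by auto
  next
    case PInf then show ?thesis using that[of 1] by auto
  qed (use \<eta>00 in auto)
  define \<gamma> where "\<gamma> = min ((p'-p)*\<eta>) ((q*ga-\<kappa>)/2)"
  have \<gamma>0: "\<gamma> > 0" using p \<eta> \<kappa>C by (simp add: \<gamma>_def)
  have far: "ereal \<eta> \<le> f y" if "\<bar>y-a\<bar> \<ge> \<delta>" for y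
  proof (cases "y \<ge> a")
    case True
    define t where "t = \<delta>/(y-a)"
    have t: "0 \<le> t" "t \<le> 1" using \<delta> that True by (auto simp: t_def)
    have "t*(y-a) = \<delta>" using \<delta> that True by (simp add: t_def)
    moreover have "(1-t)*a + t*y = a + t*(y-a)" by (simp add: algebra_simps)
    ultimately have "(1-t)*a + t*y = a + \<delta>" by simp
    then have "f (a+\<delta>) \<le> ereal t * f y" using fconv[OF t, of a y] by (simp add: fa)
    also have "\<dots> \<le> f y" by (rule ereal_mult_le_self) (use t f0 in auto)
    finally show ?thesis using \<eta> unfolding \<eta>0_def by (meson min.bounded_iff order.trans)
  next
    case False
    define t where "t = \<delta>/(a-y)"
    have t: "0 \<le> t" "t \<le> 1" using \<delta> that False by (auto simp: t_def)
    have "t*(a-y) = \<delta>" using \<delta> that False by (simp add: t_def)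
    moreover have "(1-t)*a + t*y = a - t*(a-y)" by (simp add: algebra_simps)
    ultimately have "(1-t)*a + t*y = a - \<delta>" by simp
    then have "f (a-\<delta>) \<le> ereal t * f y" using fconv[OF t, of a y] by (simp add: fa)
    also have "\<dots> \<le> f y" by (rule ereal_mult_le_self) (use t f0 in auto)
    finally show ?thesis using \<eta> unfolding \<eta>0_def by (meson min.bounded_iff order.trans)
  qed
  have bound: "ereal (\<kappa> + \<gamma>) \<le> ereal p' * f y + ereal q * g y" for y
  proof (cases "\<bar>y-a\<bar> < \<delta>")
    case True
    have e1: "q*(ga - \<epsilon>2) = q*ga - (q*ga-\<kappa>)/2" using q by (simp add: \<epsilon>2_def field_simps)
    have e2: "\<gamma> \<le> (q*ga-\<kappa>)/2" unfolding \<gamma>_def by (rule min.cobounded2)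
    have "ereal (\<kappa> + \<gamma>) \<le> ereal q * ereal (ga - \<epsilon>2)"
    proof -
      have "\<kappa> + \<gamma> \<le> q*(ga - \<epsilon>2)" unfolding e1 using e2 by argo
      then show ?thesis by simp
    qed
    also have "\<dots> \<le> ereal q * g y"
      using \<delta>(2)[OF True] q by (intro ereal_mult_left_mono) (auto simp: gaE)
    also have "\<dots> \<le> ereal p' * f y + ereal q * g y"
    proof -
      have "0 \<le> ereal p' * f y" using f0[of y] p by (intro ereal_0_le_mult) auto
      then show ?thesis by (rule add_increasing) simp
    qed
    finally show ?thesis .
  next
    case False
    have fy: "ereal \<eta> \<le> f y" using far False by simp
    have Kle: "K \<le> ereal p * f y + ereal q * g y" unfolding K_def by (rule INF_lower) simp
    show ?thesis
    proof (cases "f y = \<infinity> \<or> g y = \<infinity>")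
      case True
      have A: "0 \<le> ereal p' * f y" "0 \<le> ereal q * g y" using f0[of y] g0[of y] p q by (intro ereal_0_le_mult; simp)+
      from True have "ereal p' * f y = \<infinity> \<or> ereal q * g y = \<infinity>" using p q by auto
      then have "ereal p' * f y + ereal q * g y = \<infinity>" using A by auto
      then show ?thesis by (metis ereal_less_eq(1))
    next
      case False
      then obtain fy gy where E: "f y = ereal fy" "g y = ereal gy"
        using f0[of y] g0[of y] by (cases "f y"; cases "g y") auto
      have "\<kappa> \<le> p*fy + q*gy" using Kle KE E by simp
      moreover have "\<eta> \<le> fy" using fy E by simp
      ultimately have "\<kappa> + \<gamma> \<le> p'*fy + q*gy"
      proof -
        have "(p'-p)*\<eta> \<le> (p'-p)*fy" using p \<open>\<eta> \<le> fy\<close> by (intro mult_left_mono) auto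
        moreover have "\<gamma> \<le> (p'-p)*\<eta>" unfolding \<gamma>_def by (rule min.cobounded1)
        moreover have "p'*fy = p*fy + (p'-p)*fy" by (simp add: algebra_simps)
        ultimately show ?thesis using \<open>\<kappa> \<le> p*fy + q*gy\<close> by argo
      qed
      then show ?thesis using E by simp
    qed
  qed
  have "ereal (\<kappa> + \<gamma>) \<le> (INF x. ereal p' * f x + ereal q * g x)"
    by (rule INF_greatest) (rule bound)
  moreover have "K < ereal (\<kappa> + \<gamma>)" using KE \<gamma>0 by simp
  ultimately show ?thesis unfolding K_def by simp
qed



definition LS :: "real set \<Rightarrow> (real \<Rightarrow> real) \<Rightarrow> real \<Rightarrow> ereal" where
  "LS D L x = (SUP t. ereal (t*x) - (if t \<in> D then ereal (L t) else \<infinity>))"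

definition goodcgf :: "real set \<Rightarrow> (real \<Rightarrow> real) \<Rightarrow> real \<Rightarrow> bool" where
  "goodcgf D L a \<longleftrightarrow> convex D \<and> 0 \<in> interior D \<and> L 0 = 0 \<and> convex_on D L \<and>
     (\<forall>t\<in>D. a*t \<le> L t) \<and> (\<forall>t\<in>D. t \<noteq> 0 \<longrightarrow> a*t < L t) \<and> (L has_real_derivative a) (at 0)"

lemma LS_upper: "t \<in> D \<Longrightarrow> ereal (t*x - L t) \<le> LS D L x"
  unfolding LS_def by (rule SUP_upper2[of t]) auto

lemma LS_least': "(\<And>t. t \<in> D \<Longrightarrow> ereal (t*x - L t) \<le> B) \<Longrightarrow> LS D L x \<le> B"
  unfolding LS_def by (rule SUP_least) (auto split: if_splits)

lemma LS_least: "(\<And>t. t \<in> D \<Longrightarrow> t*x - L t \<le> B) \<Longrightarrow> LS D L x \<le> ereal B"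
  by (rule LS_least') auto

lemma good_0D: "goodcgf D L a \<Longrightarrow> 0 \<in> D"
  unfolding goodcgf_def using interior_subset by blast

lemma LS_nonneg: "goodcgf D L a \<Longrightarrow> 0 \<le> LS D L x"
  using LS_upper[of 0 D x L] good_0D[of D L a] by (auto simp: goodcgf_def zero_ereal_def)

lemma LS_zero: "goodcgf D L a \<Longrightarrow> LS D L a = 0"
proof -
  assume g: "goodcgf D L a"
  have "LS D L a \<le> ereal 0"
    by (rule LS_least) (use g in \<open>auto simp: goodcgf_def mult.commute\<close>)
  then show ?thesis using LS_nonneg[OF g, of a] by (simp add: zero_ereal_def)
qed

lemma LS_pos: assumes g: "goodcgf D L a" and x: "x \<noteq> a" shows "0 < LS D L x"
proof -
  from g have der: "(L has_real_derivative a) (at 0)" and L0: "L 0 = 0" and int: "0 \<in> interior D"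
    by (auto simp: goodcgf_def)
  from der have "((\<lambda>y. (L y - L 0) / (y - 0)) \<longlongrightarrow> a) (at 0)"
    by (simp add: has_field_derivative_iff)
  then have lim: "((\<lambda>y. L y / y) \<longlongrightarrow> a) (at 0)" using L0 by simp
  define e where "e = \<bar>x - a\<bar>/2"
  have e: "e > 0" using x by (simp add: e_def)
  obtain d where d: "d > 0" "\<And>y. y \<noteq> 0 \<Longrightarrow> norm (y - 0) < d \<Longrightarrow> norm (L y / y - a) < e"
    using LIM_D[OF lim e] by blast
  obtain d' where d': "d' > 0" "ball 0 d' \<subseteq> D" using int by (meson mem_interior)
  define r where "r = min d d' / 2"
  have r: "r > 0" "r < d" "r < d'" using d d' by (auto simp: r_def)
  define t where "t = (if x > a then r else -r)"
  have t0: "t \<noteq> 0" using x r by (simp add: t_def)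
  have at: "\<bar>t\<bar> = r" using x r by (simp add: t_def)
  have tD: "t \<in> D" using d' at r by (auto simp: subset_iff dist_norm)
  have "\<bar>L t / t - a\<bar> < e" using d(2)[OF t0] at r by simp
  then have "\<bar>(L t - a*t) / t\<bar> < e" using t0 by (simp add: diff_divide_distrib)
  then have A: "\<bar>L t - a*t\<bar> < e * \<bar>t\<bar>" using t0 by (simp add: abs_divide pos_divide_less_eq)
  have B: "t*(x - a) = r * \<bar>x - a\<bar>" using x by (simp add: t_def algebra_simps)
  have "e * \<bar>t\<bar> < r * \<bar>x - a\<bar>" using at r x by (simp add: e_def)
  moreover have "t*x - L t = t*(x - a) - (L t - a*t)" by (simp add: algebra_simps)
  moreover have "L t - a*t < e * \<bar>t\<bar>" using A by (simp only: abs_less_iff)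
  ultimately have "0 < t*x - L t" using B by argo
  then have "ereal 0 < ereal (t*x - L t)" by simp
  also have "\<dots> \<le> LS D L x" by (rule LS_upper[OF tD])
  finally show ?thesis by (simp add: zero_ereal_def)
qed

lemma LS_conv:
  assumes th: "0 \<le> \<theta>" "\<theta> \<le> 1" and g: "goodcgf D L a"
  shows "LS D L ((1-\<theta>)*u + \<theta>*w) \<le> ereal (1-\<theta>) * LS D L u + ereal \<theta> * LS D L w"
proof (rule LS_least')
  fix t assume t: "t \<in> D"
  have "ereal (t * ((1-\<theta>)*u + \<theta>*w) - L t) = ereal (1-\<theta>) * ereal (t*u - L t) + ereal \<theta> * ereal (t*w - L t)"
    by (simp add: algebra_simps)
  also have "\<dots> \<le> ereal (1-\<theta>) * LS D L u + ereal \<theta> * LS D L w"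
    by (intro add_mono ereal_mult_left_mono LS_upper t) (use th in auto)
  finally show "ereal (t * ((1-\<theta>)*u + \<theta>*w) - L t) \<le> ereal (1-\<theta>) * LS D L u + ereal \<theta> * LS D L w" .
qed

lemma LS_small_dir:
  assumes g: "goodcgf D L a" and s: "s = 1 \<or> s = -1" and e: "\<epsilon> > 0"
  shows "\<exists>h0>0. \<forall>h. 0 < h \<and> h < h0 \<longrightarrow> LS D L (a + s*h) \<le> ereal (\<epsilon>*h)"
proof -
  from g have cD: "convex D" and L0: "L 0 = 0" and cL: "convex_on D L"
    and ge: "\<forall>t\<in>D. a*t \<le> L t" and gt: "\<forall>t\<in>D. t \<noteq> 0 \<longrightarrow> a*t < L t"
    by (auto simp: goodcgf_def)
  have D0: "0 \<in> D" using good_0D[OF g] .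
  have ss: "s * s = 1" using s by auto
  define r where "r = \<epsilon> * s"
  define h0 where "h0 = (if r \<in> D then (L r - a*r)/\<epsilon> else 1)"
  have h0: "h0 > 0" using gt e s by (auto simp: h0_def r_def)
  show ?thesis
  proof (intro exI[of _ h0] conjI allI impI h0)
    fix h assume h: "0 < h \<and> h < h0"
    show "LS D L (a + s*h) \<le> ereal (\<epsilon>*h)"
    proof (rule LS_least)
      fix t assume t: "t \<in> D"
      have eq: "t * (a + s*h) - L t = (t * s)*h - (L t - a*t)" by (simp add: algebra_simps)
      show "t * (a + s*h) - L t \<le> \<epsilon>*h"
      proof (cases "t * s \<le> \<epsilon>")
        case True
        have "(t * s)*h \<le> \<epsilon>*h" using True h by (intro mult_right_mono) auto
        then show ?thesis using eq ge t by fastforce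
      next
        case False
        define c where "c = \<epsilon>/(t * s)"
        have c: "0 \<le> c" "c \<le> 1" using False e by (auto simp: c_def)
        have ts: "t * s > 0" using False e by linarith
        have tt: "t = (t * s) * s" using ss by (simp add: mult.assoc)
        have cts: "c * (t * s) = \<epsilon>" using ts unfolding c_def by (metis less_irrefl nonzero_eq_divide_eq)
        then have "c * t = \<epsilon> * s" by (subst tt) (simp add: mult.assoc[symmetric])
        then have rc: "r = (1-c)*0 + c*t" by (simp add: r_def)
        have rD: "r \<in> D" using convexD[OF cD D0 t, of "1-c" c] c rc by simp
        have "L r \<le> (1-c) * L 0 + c * L t" using convex_onD[OF cL, of c 0 t] c D0 t rc by simp
        then have Lr: "L r \<le> c * L t" using L0 by simp
        have "L r - a*r \<le> c * (L t - a*t)" using Lr rc by (simp add: algebra_simps)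
        then have "(L r - a*r) * (t * s) \<le> c * (L t - a*t) * (t * s)"
          using ts by (intro mult_right_mono) auto
        also have "\<dots> = (c * (t * s)) * (L t - a*t)" by (simp add: algebra_simps)
        finally have "(L r - a*r) * (t * s) \<le> \<epsilon> * (L t - a*t)" using cts by simp
        moreover have "h \<le> (L r - a*r)/\<epsilon>" using h rD by (simp add: h0_def)
        then have "\<epsilon>*h \<le> L r - a*r" using e by (simp add: field_simps)
        moreover have "\<epsilon>*h*(t * s) \<le> (L r - a*r)*(t * s)"
          by (rule mult_right_mono) (use \<open>\<epsilon>*h \<le> L r - a*r\<close> False e in auto)
        ultimately have "\<epsilon>*h*(t * s) \<le> \<epsilon> * (L t - a*t)" by linarith
        then have "h*(t * s) \<le> L t - a*t" using e by (simp add: mult.assoc)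
        then have "(t * s)*h - (L t - a*t) \<le> 0" by (simp add: mult.commute)
        moreover have "0 \<le> \<epsilon>*h" using e h by simp
        ultimately show ?thesis using eq by linarith
      qed
    qed
  qed
qed

lemma LS_small:
  assumes g: "goodcgf D L a" and e: "\<epsilon> > 0"
  shows "\<exists>h0>0. \<forall>h. 0 < h \<and> h < h0 \<longrightarrow> LS D L (a+h) \<le> ereal (\<epsilon>*h) \<and> LS D L (a-h) \<le> ereal (\<epsilon>*h)"
proof -
  obtain h1 where h1: "h1 > 0" "\<forall>h. 0 < h \<and> h < h1 \<longrightarrow> LS D L (a + 1*h) \<le> ereal (\<epsilon>*h)"
    using LS_small_dir[OF g _ e, of 1] by auto
  obtain h2 where h2: "h2 > 0" "\<forall>h. 0 < h \<and> h < h2 \<longrightarrow> LS D L (a + (-1)*h) \<le> ereal (\<epsilon>*h)"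
    using LS_small_dir[OF g _ e, of "-1"] by auto
  show ?thesis using h1 h2 by (intro exI[of _ "min h1 h2"]) auto
qed

lemma LS_lsc:
  assumes g: "goodcgf D L a" and fin: "LS D L x < \<infinity>" and e: "\<epsilon> > 0"
  shows "\<exists>\<delta>>0. \<forall>y. \<bar>y-x\<bar> < \<delta> \<longrightarrow> LS D L x - ereal \<epsilon> \<le> LS D L y"
proof -
  obtain v where v: "LS D L x = ereal v" using fin LS_nonneg[OF g, of x] by (cases "LS D L x") auto
  have "ereal (v - \<epsilon>/2) < LS D L x" using v e by simp
  then obtain t where "ereal (v - \<epsilon>/2) < ereal (t*x) - (if t \<in> D then ereal (L t) else \<infinity>)"
    unfolding LS_def less_SUP_iff by blast
  then have tD: "t \<in> D" and tv: "v - \<epsilon>/2 < t*x - L t" by (auto split: if_splits)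
  define \<delta> where "\<delta> = \<epsilon>/(2*(\<bar>t\<bar>+1))"
  have \<delta>: "\<delta> > 0" using e by (simp add: \<delta>_def add_pos_nonneg)
  show ?thesis
  proof (intro exI[of _ \<delta>] conjI allI impI \<delta>)
    fix y assume y: "\<bar>y-x\<bar> < \<delta>"
    have "\<bar>t\<bar> * \<bar>y-x\<bar> \<le> (\<bar>t\<bar>+1) * \<delta>" using y
      by (intro mult_mono) auto
    also have "\<dots> = \<epsilon>/2" using abs_ge_zero[of t] by (simp add: \<delta>_def field_simps del: abs_ge_zero)
    finally have "\<bar>t*y - t*x\<bar> \<le> \<epsilon>/2" by (simp add: abs_mult[symmetric] right_diff_distrib)
    then have "v - \<epsilon> \<le> t*y - L t" using tv by linarith
    then have "ereal (v - \<epsilon>) \<le> LS D L y" using LS_upper[OF tD, of y L] by (metis ereal_less_eq(3) order.trans)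
    then show "LS D L x - ereal \<epsilon> \<le> LS D L y" using v by simp
  qed
qed

lemma LS_tangent:
  assumes g: "goodcgf D L a" and t0: "t0 \<in> interior D" and der: "(L has_real_derivative c) (at t0)"
  shows "LS D L c \<le> ereal (t0*c - L t0)"
proof (rule LS_least)
  fix t assume t: "t \<in> D"
  from g have cD: "convex D" and cL: "convex_on D L" by (auto simp: goodcgf_def)
  have "L t - L t0 \<ge> c * (t - t0)"
    by (rule convex_on_imp_above_tangent[OF cL convex_connected[OF cD] t0 t])
       (rule has_field_derivative_at_within[OF der])
  then show "t*c - L t \<le> t0*c - L t0" by (simp add: algebra_simps)
qed



lemma prod_Pair: "(\<Prod>i\<in>{l}\<times>A. f i) = (\<Prod>r\<in>A. f (l, r))"
proof -
  have "{l} \<times> A = Pair l ` A" by auto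
  then show ?thesis by (simp add: prod.reindex inj_on_def)
qed

lemma mgf_power:
  fixes M :: "'a measure" and X :: "nat \<Rightarrow> nat \<Rightarrow> 'a \<Rightarrow> real"
  assumes P: "prob_space M"
    and rv: "\<And>r. X l r \<in> borel_measurable M"
    and indep: "prob_space.indep_vars M (\<lambda>_. borel) (\<lambda>(l, r). X l r) ({1..k} \<times> UNIV)"
    and ident: "\<And>r. distr M borel (X l r) = distr M borel (X l 0)"
    and l: "l \<in> {1..k}"
  shows "(\<integral>\<^sup>+\<omega>. ennreal (exp ((real n * t) * sample_mean X l n \<omega>)) \<partial>M)
        = (\<integral>\<^sup>+\<omega>. ennreal (exp (t * X l 0 \<omega>)) \<partial>M) ^ n"
proof (cases "n = 0")
  case True
  then show ?thesis using prob_space.emeasure_space_1[OF P] by (simp add: sample_mean_def)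
next
  case False
  interpret prob_space M by (rule P)
  define I where "I = {l} \<times> {..<n}"
  define Z where "Z = (\<lambda>(i::nat\<times>nat) \<omega>. ennreal (exp (t * (case i of (l, r) \<Rightarrow> X l r) \<omega>)))"
  have ind: "indep_vars (\<lambda>_. borel) Z I"
    unfolding Z_def
    by (rule indep_vars_compose2[OF indep_vars_subset[OF indep], where Y="\<lambda>i y. ennreal (exp (t * y))"])
       (use l in \<open>auto simp: I_def\<close>)
  have "(\<integral>\<^sup>+\<omega>. ennreal (exp ((real n * t) * sample_mean X l n \<omega>)) \<partial>M)
      = (\<integral>\<^sup>+\<omega>. (\<Prod>i\<in>I. Z i \<omega>) \<partial>M)"
  proof (rule nn_integral_cong)
    fix \<omega>
    have "(real n * t) * sample_mean X l n \<omega> = (\<Sum>r<n. t * X l r \<omega>)"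
    proof -
      have "(real n * t) * sample_mean X l n \<omega> = t * (\<Sum>r<n. X l r \<omega>)"
        using False by (simp add: sample_mean_def)
      then show ?thesis by (simp add: sum_distrib_left)
    qed
    then have "ennreal (exp ((real n * t) * sample_mean X l n \<omega>)) = (\<Prod>r<n. ennreal (exp (t * X l r \<omega>)))"
      by (simp add: exp_sum prod_ennreal)
    also have "\<dots> = (\<Prod>i\<in>I. Z i \<omega>)"
      unfolding I_def Z_def
      by (simp add: prod_Pair)
    finally show "ennreal (exp ((real n * t) * sample_mean X l n \<omega>)) = (\<Prod>i\<in>I. Z i \<omega>)" .
  qed
  also have "\<dots> = (\<Prod>i\<in>I. \<integral>\<^sup>+\<omega>. Z i \<omega> \<partial>M)"
    by (rule indep_vars_nn_integral[of I Z]) (use ind in \<open>auto simp: I_def Z_def\<close>)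
  also have "\<dots> = (\<Prod>r<n. \<integral>\<^sup>+\<omega>. ennreal (exp (t * X l r \<omega>)) \<partial>M)"
    unfolding I_def Z_def
    by (simp add: prod_Pair)
  also have "\<dots> = (\<Prod>r<n. \<integral>\<^sup>+\<omega>. ennreal (exp (t * X l 0 \<omega>)) \<partial>M)"
  proof (rule prod.cong[OF refl])
    fix r
    have "(\<integral>\<^sup>+\<omega>. ennreal (exp (t * X l r \<omega>)) \<partial>M) = (\<integral>\<^sup>+x. ennreal (exp (t * x)) \<partial>distr M borel (X l r))"
      by (subst nn_integral_distr) (use rv in auto)
    also have "\<dots> = (\<integral>\<^sup>+x. ennreal (exp (t * x)) \<partial>distr M borel (X l 0))" by (simp only: ident[of r])
    also have "\<dots> = (\<integral>\<^sup>+\<omega>. ennreal (exp (t * X l 0 \<omega>)) \<partial>M)"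
      by (subst nn_integral_distr) (use rv in auto)
    finally show "(\<integral>\<^sup>+\<omega>. ennreal (exp (t * X l r \<omega>)) \<partial>M) = (\<integral>\<^sup>+\<omega>. ennreal (exp (t * X l 0 \<omega>)) \<partial>M)" .
  qed
  also have "\<dots> = (\<integral>\<^sup>+\<omega>. ennreal (exp (t * X l 0 \<omega>)) \<partial>M) ^ n" by simp
  finally show ?thesis .
qed

lemma Lambda_eq:
  fixes M :: "'a measure" and X :: "nat \<Rightarrow> nat \<Rightarrow> 'a \<Rightarrow> real"
  assumes P: "prob_space M"
    and rv: "\<And>r. X l r \<in> borel_measurable M"
    and indep: "prob_space.indep_vars M (\<lambda>_. borel) (\<lambda>(l, r). X l r) ({1..k} \<times> UNIV)"
    and ident: "\<And>r. distr M borel (X l r) = distr M borel (X l 0)"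
    and l: "l \<in> {1..k}"
  shows "Lambda M X l t = ln_ennreal (\<integral>\<^sup>+\<omega>. ennreal (exp (t * X l 0 \<omega>)) \<partial>M)"
proof -
  define c where "c = (\<integral>\<^sup>+\<omega>. ennreal (exp (t * X l 0 \<omega>)) \<partial>M)"
  have sc: "scaled_cgf M X l t (Suc n) = ln_ennreal c" for n
  proof -
    have "scaled_cgf M X l t (Suc n) = ln_ennreal (c ^ Suc n) / ereal (real (Suc n))"
      unfolding scaled_cgf_def Lambda_n_def c_def
      using mgf_power[OF P rv indep ident l, of "Suc n" t] by simp
    also have "\<dots> = ln_ennreal c"
    proof (cases "c = \<top>")
      case True
      then show ?thesis by (simp add: ln_ennreal_def power_eq_top_ennreal)
    next
      case False
      then obtain v where v: "c = ennreal v" "0 \<le> v" by (cases c) auto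
      have "c ^ Suc n = ennreal (v ^ Suc n)" using v by (simp only: ennreal_power)
      moreover have "ennreal (v ^ Suc n) \<noteq> \<top>" by simp
      ultimately show ?thesis using v
        by (simp add: ln_ennreal_def ln_realpow del: power_Suc)
    qed
    finally show ?thesis .
  qed
  have "(\<lambda>n. scaled_cgf M X l t (n + 1)) \<longlonglongrightarrow> ln_ennreal c" using sc by simp
  then have "scaled_cgf M X l t \<longlonglongrightarrow> ln_ennreal c" by (rule LIMSEQ_offset)
  then show ?thesis unfolding Lambda_def c_def by (rule limI)
qed



lemma cgf_facts:
  fixes M :: "'a measure" and X :: "nat \<Rightarrow> nat \<Rightarrow> 'a \<Rightarrow> real" and \<mu> :: real
  assumes P: "prob_space M"
    and rv: "\<And>r. X l r \<in> borel_measurable M"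
    and indep: "prob_space.indep_vars M (\<lambda>_. borel) (\<lambda>(l, r). X l r) ({1..k} \<times> UNIV)"
    and ident: "\<And>r. distr M borel (X l r) = distr M borel (X l 0)"
    and l: "l \<in> {1..k}"
    and A2: "assm2 M X l" and A3: "assm3 M X l"
    and mu: "\<mu> = prob_space.expectation M (X l 0)"
  defines "c \<equiv> \<lambda>t. \<integral>\<^sup>+\<omega>. ennreal (exp (t * X l 0 \<omega>)) \<partial>M"
  defines "D \<equiv> {t. c t \<noteq> \<top>}"
  defines "L \<equiv> \<lambda>t. ln (enn2real (c t))"
  shows "goodcgf D L \<mu> \<and> (\<forall>x. Lambda_star M X l x = LS D L x) \<and> dom_Lambda M X l = D
         \<and> (\<forall>t\<in>D. Lambda_r M X l t = L t)
         \<and> (\<forall>t\<in>interior D. (L has_real_derivative deriv (Lambda_r M X l) t) (at t))"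
proof -
  interpret prob_space M by (rule P)
  note rv0[measurable] = rv[of 0]
  have Lam: "Lambda M X l t = (if t \<in> D then ereal (L t) else \<infinity>)" for t
    using Lambda_eq[OF P rv indep ident l, of t]
    by (simp add: ln_ennreal_def D_def L_def c_def)
  have dom: "dom_Lambda M X l = D" by (auto simp: dom_Lambda_def Lam)
  have Lr: "\<forall>t\<in>D. Lambda_r M X l t = L t" by (simp add: Lambda_r_def Lam)
  have LSeq: "\<forall>x. Lambda_star M X l x = LS D L x"
    by (simp add: Lambda_star_def LS_def Lam)
  have int0: "0 \<in> interior D" using A2 by (simp add: assm2_def dom)
  have c0: "c 0 = 1" by (simp add: c_def emeasure_space_1)
  have L0: "L 0 = 0" by (simp add: L_def c0)
  obtain \<epsilon> where \<epsilon>: "\<epsilon> > 0" "ball 0 \<epsilon> \<subseteq> D" using int0 by (meson mem_interior)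
  define e where "e = \<epsilon>/2"
  have e: "e > 0" "e \<in> D" "-e \<in> D" using \<epsilon> by (auto simp: e_def subset_iff)
  have intexp: "integrable M (\<lambda>\<omega>. exp (t * X l 0 \<omega>))" if "t \<in> D" for t
    by (rule integrableI_nonneg) (use that in \<open>auto simp: D_def c_def less_top\<close>)
  have cint: "c t = ennreal (\<integral>\<omega>. exp (t * X l 0 \<omega>) \<partial>M)" if "t \<in> D" for t
    unfolding c_def by (rule nn_integral_eq_integral[OF intexp[OF that]]) auto
  have intY: "integrable M (X l 0)"
  proof (rule Bochner_Integration.integrable_bound)
    show "integrable M (\<lambda>\<omega>. (exp (e * X l 0 \<omega>) + exp ((-e) * X l 0 \<omega>)) / e)"
      using intexp[OF e(2)] intexp[OF e(3)] by auto
    show "AE \<omega> in M. norm (X l 0 \<omega>) \<le> norm ((exp (e * X l 0 \<omega>) + exp ((-e) * X l 0 \<omega>)) / e)"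
    proof (intro AE_I2)
      fix \<omega>
      define y where "y = X l 0 \<omega>"
      have "e * \<bar>y\<bar> \<le> exp (e * \<bar>y\<bar>)" using exp_ge_add_one_self[of "e * \<bar>y\<bar>"] by linarith
      also have "\<dots> \<le> exp (e * y) + exp ((-e) * y)"
        by (cases "y \<ge> 0") (auto simp: add_increasing add_increasing2)
      finally have "\<bar>y\<bar> \<le> (exp (e * y) + exp ((-e) * y)) / e" using e by (simp add: field_simps)
      then show "norm (X l 0 \<omega>) \<le> norm ((exp (e * X l 0 \<omega>) + exp ((-e) * X l 0 \<omega>)) / e)"
        using e by (simp add: y_def)
    qed
  qed simp
  have ge: "exp (t * \<mu>) \<le> (\<integral>\<omega>. exp (t * X l 0 \<omega>) \<partial>M)" if "t \<in> D" for t
  proof -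
    have "(\<integral>\<omega>. exp (t*\<mu>) + (exp (t*\<mu>) * t) * X l 0 \<omega> - exp (t*\<mu>) * t * \<mu> \<partial>M)
        \<le> (\<integral>\<omega>. exp (t * X l 0 \<omega>) \<partial>M)"
    proof (rule integral_mono)
      show "integrable M (\<lambda>\<omega>. exp (t*\<mu>) + (exp (t*\<mu>) * t) * X l 0 \<omega> - exp (t*\<mu>) * t * \<mu>)"
        using intY by auto
      show "integrable M (\<lambda>\<omega>. exp (t * X l 0 \<omega>))" by (rule intexp[OF that])
      fix \<omega>
      have "exp (t*\<mu>) * (1 + (t * X l 0 \<omega> - t*\<mu>)) \<le> exp (t*\<mu>) * exp (t * X l 0 \<omega> - t*\<mu>)"
        by (intro mult_left_mono exp_ge_add_one_self) auto
      also have "\<dots> = exp (t * X l 0 \<omega>)" by (simp add: exp_diff)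
      finally show "exp (t*\<mu>) + (exp (t*\<mu>) * t) * X l 0 \<omega> - exp (t*\<mu>) * t * \<mu> \<le> exp (t * X l 0 \<omega>)"
        by (simp add: algebra_simps)
    qed
    also have "(\<integral>\<omega>. exp (t*\<mu>) + (exp (t*\<mu>) * t) * X l 0 \<omega> - exp (t*\<mu>) * t * \<mu> \<partial>M) = exp (t*\<mu>)"
      using intY by (simp add: mu prob_space)
    finally show ?thesis by simp
  qed
  have pos: "0 < enn2real (c t)" and muL: "\<mu> * t \<le> L t" if "t \<in> D" for t
  proof -
    have "exp (t*\<mu>) \<le> enn2real (c t)" using ge[OF that] cint[OF that] by simp
    moreover have "0 < exp (t*\<mu>)" by simp
    ultimately show "0 < enn2real (c t)" by linarith
    show "\<mu> * t \<le> L t" unfolding L_def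
    proof -
      have "ln (exp (t*\<mu>)) \<le> ln (enn2real (c t))"
        using \<open>exp (t*\<mu>) \<le> enn2real (c t)\<close> \<open>0 < enn2real (c t)\<close> by (subst ln_le_cancel_iff) auto
      then show "\<mu> * t \<le> ln (enn2real (c t))" by (simp add: mult.commute)
    qed
  qed
  have conv: "(1-\<theta>)*a + \<theta>*b \<in> D \<and> L ((1-\<theta>)*a + \<theta>*b) \<le> (1-\<theta>) * L a + \<theta> * L b"
    if ab: "a \<in> D" "b \<in> D" and th: "0 \<le> \<theta>" "\<theta> \<le> 1" for a b \<theta>
  proof -
    define z where "z = (1-\<theta>)*a + \<theta>*b"
    define K where "K = (1-\<theta>) * L a + \<theta> * L b"
    have ea: "exp (L a) = (\<integral>\<omega>. exp (a * X l 0 \<omega>) \<partial>M)"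
      using pos[OF ab(1)] cint[OF ab(1)] by (simp add: L_def)
    have eb: "exp (L b) = (\<integral>\<omega>. exp (b * X l 0 \<omega>) \<partial>M)"
      using pos[OF ab(2)] cint[OF ab(2)] by (simp add: L_def)
    define R where "R = (\<lambda>\<omega>. (exp K * (1-\<theta>) * exp (- L a)) * exp (a * X l 0 \<omega>)
                           + (exp K * \<theta> * exp (- L b)) * exp (b * X l 0 \<omega>))"
    have intR: "integrable M R" unfolding R_def using intexp[OF ab(1)] intexp[OF ab(2)] by auto
    have R0: "0 \<le> R \<omega>" for \<omega> unfolding R_def using th by (intro add_nonneg_nonneg mult_nonneg_nonneg) auto
    have pt: "exp (z * X l 0 \<omega>) \<le> R \<omega>" for \<omega>
    proof -
      define u where "u = a * X l 0 \<omega> - L a"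
      define v where "v = b * X l 0 \<omega> - L b"
      have "z * X l 0 \<omega> = K + ((1-\<theta>) * u + \<theta> * v)"
        by (simp add: z_def K_def u_def v_def algebra_simps)
      then have "exp (z * X l 0 \<omega>) = exp K * exp ((1-\<theta>) * u + \<theta> * v)" by (simp add: exp_add)
      also have "exp ((1-\<theta>) * u + \<theta> * v) \<le> (1-\<theta>) * exp u + \<theta> * exp v"
        using convex_onD[OF exp_convex, of \<theta> u v] th by simp
      then have "exp K * exp ((1-\<theta>) * u + \<theta> * v) \<le> exp K * ((1-\<theta>) * exp u + \<theta> * exp v)"
        by (intro mult_left_mono) auto
      also have "exp K * ((1-\<theta>) * exp u + \<theta> * exp v) = R \<omega>"
        by (simp add: R_def u_def v_def exp_diff exp_minus field_simps)
      finally show ?thesis .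
    qed
    have "(\<integral>\<omega>. R \<omega> \<partial>M) = exp K * (1-\<theta>) * exp (- L a) * exp (L a) + exp K * \<theta> * exp (- L b) * exp (L b)"
      unfolding R_def ea eb using intexp[OF ab(1)] intexp[OF ab(2)] by simp
    also have "\<dots> = exp K" by (simp add: exp_minus field_simps)
    finally have intRv: "(\<integral>\<omega>. R \<omega> \<partial>M) = exp K" .
    have "c z \<le> (\<integral>\<^sup>+\<omega>. ennreal (R \<omega>) \<partial>M)"
      unfolding c_def by (intro nn_integral_mono ennreal_leI pt)
    also have "\<dots> = ennreal (exp K)"
      using nn_integral_eq_integral[OF intR] R0 intRv by simp
    finally have cz: "c z \<le> ennreal (exp K)" .
    then have zD: "z \<in> D" by (auto simp: D_def top_unique)
    have "enn2real (c z) \<le> exp K" using enn2real_mono[OF cz] by simp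
    then have "L z \<le> ln (exp K)" unfolding L_def using pos[OF zD] by (subst ln_le_cancel_iff) auto
    then show ?thesis using zD by (simp add: z_def K_def)
  qed
  have cD: "convex D"
    unfolding convex_alt real_scaleR_def using conv by blast
  have cL: "convex_on D L"
  proof (rule convex_onI[OF _ cD])
    fix t x y :: real assume "t > 0" "t < 1" "x \<in> D" "y \<in> D"
    then show "L ((1 - t) *\<^sub>R x + t *\<^sub>R y) \<le> (1 - t) * L x + t * L y"
      using conv[of x y t] by simp
  qed
  have A3': "\<forall>a\<in>interior D. \<forall>b\<in>interior D. \<forall>t::real. a \<noteq> b \<and> 0 < t \<and> t < 1 \<longrightarrow>
            Lambda_r M X l (t * a + (1 - t) * b) < t * Lambda_r M X l a + (1 - t) * Lambda_r M X l b"
     and diff: "\<forall>t\<in>interior D. Lambda_r M X l differentiable (at t)"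
    using A3 unfolding assm3_def Let_def dom by auto
  have iD: "interior D \<subseteq> D" by (rule interior_subset)
  have derL: "(L has_real_derivative deriv (Lambda_r M X l) t) (at t)" if "t \<in> interior D" for t
  proof (rule has_field_derivative_transform_within_open[where S="interior D"])
    show "(Lambda_r M X l has_real_derivative deriv (Lambda_r M X l) t) (at t)"
      using diff that DERIV_deriv_iff_real_differentiable by blast
  qed (use that iD Lr in auto)
  define d where "d = deriv (Lambda_r M X l) 0"
  have d0: "(L has_real_derivative d) (at 0)" unfolding d_def by (rule derL[OF int0])
  have "((\<lambda>t. L t - \<mu> * t) has_real_derivative d - \<mu>) (at 0)"
    using d0 by (auto intro!: derivative_eq_intros)
  moreover have "\<forall>y. \<bar>0 - y\<bar> < \<epsilon> \<longrightarrow> L 0 - \<mu> * 0 \<le> L y - \<mu> * y"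
    using \<epsilon> muL L0 by (auto simp: subset_iff dist_norm)
  ultimately have "d - \<mu> = 0" by (rule DERIV_local_min[OF _ \<epsilon>(1)])
  then have der: "(L has_real_derivative \<mu>) (at 0)" using d0 by simp
  have strict: "\<mu> * t < L t" if tD: "t \<in> D" and t0: "t \<noteq> 0" for t
  proof (rule ccontr)
    assume "\<not> \<mu> * t < L t"
    then have Lt: "L t \<le> \<mu> * t" by simp
    define s where "s = t/2"
    have sI: "s \<in> interior D"
      using mem_interior_convex_shrink[OF cD int0 tD, of "1/2"] by (simp add: s_def)
    have "L s \<le> (1 - 1/2) * L 0 + (1/2) * L t" using conv[OF _ tD, of 0 "1/2"] good_0D int0 iD
      by (auto simp: s_def)
    then have Ls: "L s = \<mu> * s" using Lt L0 muL[OF iD[THEN subsetD, OF sI]] by (simp add: s_def)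
    have s0: "s \<noteq> 0" using t0 by (simp add: s_def)
    have "Lambda_r M X l ((1/2) * s + (1 - 1/2) * 0) < (1/2) * Lambda_r M X l s + (1 - 1/2) * Lambda_r M X l 0"
      using A3'[rule_format, OF sI int0, of "1/2"] s0 by simp
    moreover have "s/2 \<in> D" using conv[OF iD[THEN subsetD, OF sI] iD[THEN subsetD, OF int0], of "1/2"] by simp
    moreover have "Lambda_r M X l s = L s" "Lambda_r M X l 0 = L 0" using Lr iD sI int0 by auto
    ultimately have "L (s/2) < (1/2) * L s" using Lr L0 by auto
    then show False using muL[OF \<open>s/2 \<in> D\<close>] Ls by simp
  qed
  have good: "goodcgf D L \<mu>"
    unfolding goodcgf_def using cD int0 L0 cL muL strict der by auto
  show ?thesis using good LSeq dom Lr derL by blast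
qed

lemma cgf_exists:
  fixes M :: "'a measure" and X :: "nat \<Rightarrow> nat \<Rightarrow> 'a \<Rightarrow> real" and \<mu> :: real
  assumes P: "prob_space M"
    and rv: "\<And>r. X l r \<in> borel_measurable M"
    and indep: "prob_space.indep_vars M (\<lambda>_. borel) (\<lambda>(l, r). X l r) ({1..k} \<times> UNIV)"
    and ident: "\<And>r. distr M borel (X l r) = distr M borel (X l 0)"
    and l: "l \<in> {1..k}"
    and A2: "assm2 M X l" and A3: "assm3 M X l"
    and mu: "\<mu> = prob_space.expectation M (X l 0)"
  shows "\<exists>D L. goodcgf D L \<mu> \<and> (\<forall>x. Lambda_star M X l x = LS D L x) \<and> dom_Lambda M X l = D
         \<and> (\<forall>t\<in>D. Lambda_r M X l t = L t)
         \<and> (\<forall>t\<in>interior D. (L has_real_derivative deriv (Lambda_r M X l) t) (at t))"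
  using cgf_facts[OF assms] by blast



theorem lemma3:
  fixes M :: "'a measure" and X :: "nat \<Rightarrow> nat \<Rightarrow> 'a \<Rightarrow> real"
    and k m i j :: nat and \<sigma> :: "nat \<Rightarrow> nat" and \<mu> :: "nat \<Rightarrow> real"
  assumes "prob_space M"
    and "k \<ge> 2" and "1 \<le> m" and "m < k"
    and rv: "\<And>l r. l \<in> {1..k} \<Longrightarrow> X l r \<in> borel_measurable M"
    and indep: "prob_space.indep_vars M (\<lambda>_. borel) (\<lambda>(l, r). X l r) ({1..k} \<times> UNIV)"
    and ident: "\<And>l r. l \<in> {1..k} \<Longrightarrow> distr M borel (X l r) = distr M borel (X l 0)"
    and mu_def: "\<And>l. l \<in> {1..k} \<Longrightarrow> \<mu> l = prob_space.expectation M (X l 0)"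
    and distinct: "inj_on \<mu> {1..k}"
    and sigma: "bij_betw \<sigma> {1..k} {1..k}"
    and ordered: "\<And>a b. a \<in> {1..k} \<Longrightarrow> b \<in> {1..k} \<Longrightarrow> a < b \<Longrightarrow> \<mu> (\<sigma> a) > \<mu> (\<sigma> b)"
    and A1: "\<And>l. l \<in> {1..k} \<Longrightarrow> assm1 M X l"
    and A2: "\<And>l. l \<in> {1..k} \<Longrightarrow> assm2 M X l"
    and A3: "\<And>l. l \<in> {1..k} \<Longrightarrow> assm3 M X l"
    and A4: "\<And>l. l \<in> {1..k} \<Longrightarrow> {\<mu> (\<sigma> k)..\<mu> (\<sigma> 1)} \<subseteq> interior (F_set M X l)"
    and "i \<in> {1..m}" and "j \<in> {m+1..k}"
  shows "(\<forall>ri ri' rj. 0 < ri \<and> ri < ri' \<and> 0 < rj \<longrightarrow> G M X \<sigma> i j ri rj < G M X \<sigma> i j ri' rj)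
       \<and> (\<forall>ri rj rj'. 0 < ri \<and> 0 < rj \<and> rj < rj' \<longrightarrow> G M X \<sigma> i j ri rj < G M X \<sigma> i j ri rj')
       \<and> (\<forall>ri rj. 0 \<le> ri \<and> 0 \<le> rj \<and> min ri rj = 0 \<longrightarrow> G M X \<sigma> i j ri rj = 0)"
proof -
  have P: "prob_space M" by fact
  have ik: "i \<in> {1..k}" and jk: "j \<in> {1..k}" and ij: "i < j"
    using \<open>i \<in> {1..m}\<close> \<open>j \<in> {m+1..k}\<close> \<open>m < k\<close> by auto
  have sk: "\<sigma> x \<in> {1..k}" if "x \<in> {1..k}" for x
    using sigma that by (auto simp: bij_betw_def)
  have ex: "\<exists>D L. goodcgf D L (\<mu> (\<sigma> x)) \<and> (\<forall>y. Lambda_star M X (\<sigma> x) y = LS D L y)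
         \<and> dom_Lambda M X (\<sigma> x) = D
         \<and> (\<forall>t\<in>D. Lambda_r M X (\<sigma> x) t = L t)
         \<and> (\<forall>t\<in>interior D. (L has_real_derivative deriv (Lambda_r M X (\<sigma> x)) t) (at t))"
    if "x \<in> {1..k}" for x
    by (rule cgf_exists[OF P rv indep ident sk[OF that] A2 A3 mu_def]; rule sk[OF that])
  obtain Di Li where Fi: "goodcgf Di Li (\<mu> (\<sigma> i))" "\<forall>y. Lambda_star M X (\<sigma> i) y = LS Di Li y"
         "dom_Lambda M X (\<sigma> i) = Di"
         "\<forall>t\<in>interior Di. (Li has_real_derivative deriv (Lambda_r M X (\<sigma> i)) t) (at t)"
    using ex[OF ik] by blast
  obtain Dj Lj where Fj: "goodcgf Dj Lj (\<mu> (\<sigma> j))" "\<forall>y. Lambda_star M X (\<sigma> j) y = LS Dj Lj y"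
         "dom_Lambda M X (\<sigma> j) = Dj"
         "\<forall>t\<in>interior Dj. (Lj has_real_derivative deriv (Lambda_r M X (\<sigma> j)) t) (at t)"
    using ex[OF jk] by blast
  define a where "a = \<mu> (\<sigma> i)"
  define b where "b = \<mu> (\<sigma> j)"
  have ab: "b < a" using ordered[OF ik jk ij] by (simp add: a_def b_def)
  have inrange: "\<mu> (\<sigma> x) \<in> {\<mu> (\<sigma> k)..\<mu> (\<sigma> 1)}" if "x \<in> {1..k}" for x
  proof -
    have "\<mu> (\<sigma> k) \<le> \<mu> (\<sigma> x)"
      using ordered[OF that, of k] that \<open>k \<ge> 2\<close> by (cases "x = k") auto
    moreover have "\<mu> (\<sigma> x) \<le> \<mu> (\<sigma> 1)"
      using ordered[OF _ that, of 1] that \<open>k \<ge> 2\<close> by (cases "x = 1") auto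
    ultimately show ?thesis by simp
  qed
  have fin: "LS D L (\<mu> (\<sigma> x)) < \<infinity>"
    if g: "goodcgf D L c" and dom: "dom_Lambda M X l = D" and l: "l \<in> {1..k}"
      and dr: "\<forall>t\<in>interior D. (L has_real_derivative deriv (Lambda_r M X l) t) (at t)"
      and x: "x \<in> {1..k}" for D L c l x
  proof -
    have "\<mu> (\<sigma> x) \<in> F_set M X l" using A4[OF l] inrange[OF x] interior_subset by blast
    then obtain t0 where t0: "t0 \<in> interior D" "\<mu> (\<sigma> x) = deriv (Lambda_r M X l) t0"
      unfolding F_set_def dom by blast
    have "LS D L (\<mu> (\<sigma> x)) \<le> ereal (t0 * \<mu> (\<sigma> x) - L t0)"
      by (rule LS_tangent[OF g t0(1)]) (use dr t0 in auto)
    also have "\<dots> < \<infinity>" by simp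
    finally show ?thesis .
  qed
  have finj: "LS Dj Lj a < \<infinity>" unfolding a_def using fin[OF Fj(1) Fj(3) sk[OF jk] Fj(4) ik] .
  have fini: "LS Di Li b < \<infinity>" unfolding b_def using fin[OF Fi(1) Fi(3) sk[OF ik] Fi(4) jk] .
  have Geq: "G M X \<sigma> i j ri rj = (INF x. ereal ri * LS Di Li x + ereal rj * LS Dj Lj x)" for ri rj
    unfolding G_def using Fi(2) Fj(2) by simp
  have gi: "goodcgf Di Li a" and gj: "goodcgf Dj Lj b" using Fi(1) Fj(1) by (simp_all add: a_def b_def)
  have part1: "(INF x. ereal p * LS Di Li x + ereal q * LS Dj Lj x) < (INF x. ereal p' * LS Di Li x + ereal q * LS Dj Lj x)"
    if "0 < p" "p < p'" "0 < q" for p p' q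
  proof (rule combine[where a=a and b=b])
    show "LS Dj Lj a < \<infinity>" by (rule finj)
  qed (use that ab LS_nonneg[OF gi] LS_nonneg[OF gj] LS_zero[OF gi] LS_zero[OF gj] LS_pos[OF gi] LS_pos[OF gj]
        LS_conv[OF _ _ gi] LS_conv[OF _ _ gj] LS_small[OF gi] LS_lsc[OF gj finj] in auto)
  have part2: "(INF x. ereal p * LS Dj Lj x + ereal q * LS Di Li x) < (INF x. ereal p' * LS Dj Lj x + ereal q * LS Di Li x)"
    if "0 < p" "p < p'" "0 < q" for p p' q
  proof (rule combine[where a=b and b=a])
    show "LS Di Li b < \<infinity>" by (rule fini)
  qed (use that ab LS_nonneg[OF gi] LS_nonneg[OF gj] LS_zero[OF gi] LS_zero[OF gj] LS_pos[OF gi] LS_pos[OF gj]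
        LS_conv[OF _ _ gi] LS_conv[OF _ _ gj] LS_small[OF gj] LS_lsc[OF gi fini] in auto)
  have part3: "G M X \<sigma> i j ri rj = 0" if "0 \<le> ri" "0 \<le> rj" "min ri rj = 0" for ri rj
  proof -
    have nn: "0 \<le> ereal ri * LS Di Li x + ereal rj * LS Dj Lj x" for x
      using that LS_nonneg[OF gi, of x] LS_nonneg[OF gj, of x] by (intro add_nonneg_nonneg ereal_0_le_mult) auto
    have "ri = 0 \<or> rj = 0" using that by linarith
    then obtain x where "ereal ri * LS Di Li x + ereal rj * LS Dj Lj x = 0"
    proof
      assume "ri = 0" then show ?thesis using that(1)[of b] LS_zero[OF gj] by (simp add: zero_ereal_def[symmetric])
    next
      assume "rj = 0" then show ?thesis using that(1)[of a] LS_zero[OF gi] by (simp add: zero_ereal_def[symmetric])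
    qed
    then have "(INF x. ereal ri * LS Di Li x + ereal rj * LS Dj Lj x) \<le> 0"
      by (metis INF_lower2 UNIV_I order_refl)
    moreover have "0 \<le> (INF x. ereal ri * LS Di Li x + ereal rj * LS Dj Lj x)"
      by (rule INF_greatest) (rule nn)
    ultimately show ?thesis unfolding Geq by (rule antisym)
  qed
  show ?thesis
  proof (intro conjI allI impI)
    fix ri ri' rj :: real assume "0 < ri \<and> ri < ri' \<and> 0 < rj"
    then show "G M X \<sigma> i j ri rj < G M X \<sigma> i j ri' rj" unfolding Geq using part1 by blast
  next
    fix ri rj rj' :: real assume h: "0 < ri \<and> 0 < rj \<and> rj < rj'"
    have "G M X \<sigma> i j ri rj = (INF x. ereal rj * LS Dj Lj x + ereal ri * LS Di Li x)"
      unfolding Geq by (simp add: add.commute)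
    also have "\<dots> < (INF x. ereal rj' * LS Dj Lj x + ereal ri * LS Di Li x)" using part2 h by blast
    also have "\<dots> = G M X \<sigma> i j ri rj'" unfolding Geq by (simp add: add.commute)
    finally show "G M X \<sigma> i j ri rj < G M X \<sigma> i j ri rj'" .
  next
    fix ri rj :: real assume "0 \<le> ri \<and> 0 \<le> rj \<and> min ri rj = 0"
    then show "G M X \<sigma> i j ri rj = 0" using part3 by blast
  qed
qed


end
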